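(* Let $p$ be prime and $H\le\mathrm{S}_n$ be in $\mathfrak{InP}(\mathrm{C}_p)$, let $\gamma$ be as in the context, and let $M$ be a generator matrix of $\gamma(H)$. For orbit indices $i,j$, let $a_i$ and $a_j$ be the first non-zero entries of the columns $M_{*,i}$ and $M_{*,j}$ respectively. Then $\Omega_i\equiv_H\Omega_j$ if and only if $a_i^{-1}M_{*,i}=a_j^{-1}M_{*,j}$.
   Context: $H\le\mathrm{S}_{n}$, $n=pk$, has orbits $\Omega_1,\dots,\Omega_k$ of size $p$ with each $G_i:=H|_{\Omega_i}$ cyclic of order $p$; $G=G_1\times\dots\times G_k$, $g_1$ generates $G_1$, $g_i$ is the conjugate of $g_1$ by the involution swapping $\Omega_1$ and $\Omega_i$ via a bijection witnessing a permutation isomorphism from $G_1$ to $G_i$, and $\gamma:G\to\mathbb{F}_p^k$ is $\gamma(g_1^{r_1}\cdots g_k^{r_k})=(r_1,\dots,r_k)$. A generator matrix of $\gamma(H)$ is a matrix whose rows form a basis of $\gamma(H)$. $\Omega_i\equiv_H\Omega_j$ means there is a bijection $\psi:\Omega_i\to\Omega_j$ with $\psi(\delta^h)=\psi(\delta)^h$ for all $h\in H$, $\delta\in\Omega_i$. *)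

theory Defs
  imports "Berlekamp_Zassenhaus.Finite_Field" "HOL-Combinatorics.Permutations"
begin

text \<open>Permutations are functions on nat; S_n is the set of permutations of {1..n}.
  The field F_p is the type 'p mod_ring with CARD('p) = p prime.\<close>

definition is_perm_group :: "nat \<Rightarrow> (nat \<Rightarrow> nat) set \<Rightarrow> bool" where
  "is_perm_group n H \<longleftrightarrow> (\<forall>h\<in>H. h permutes {1..n}) \<and> id \<in> H \<and>
     (\<forall>g\<in>H. \<forall>h\<in>H. g \<circ> h \<in> H) \<and> (\<forall>h\<in>H. inv_into UNIV h \<in> H)"

definition orbit_of :: "(nat \<Rightarrow> nat) set \<Rightarrow> nat \<Rightarrow> nat set" where
  "orbit_of H x = {h x | h. h \<in> H}"

definition restr :: "nat set \<Rightarrow> (nat \<Rightarrow> nat) \<Rightarrow> (nat \<Rightarrow> nat)" where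
  "restr Om h = (\<lambda>x. if x \<in> Om then h x else x)"

definition constituent :: "(nat \<Rightarrow> nat) set \<Rightarrow> nat set \<Rightarrow> (nat \<Rightarrow> nat) set" where
  "constituent H Om = restr Om ` H"

definition cyclic_perm_group_of_order :: "(nat \<Rightarrow> nat) set \<Rightarrow> nat \<Rightarrow> bool" where
  "cyclic_perm_group_of_order G m \<longleftrightarrow> card G = m \<and> (\<exists>g\<in>G. G = range (\<lambda>r. g ^^ r))"

definition InP_Cp :: "nat \<Rightarrow> nat \<Rightarrow> nat \<Rightarrow> (nat \<Rightarrow> nat) set \<Rightarrow> (nat \<Rightarrow> nat set) \<Rightarrow> bool" where
  "InP_Cp p n k H Om \<longleftrightarrow> n = p * k \<and> is_perm_group n H \<and>
     {orbit_of H x | x. x \<in> {1..n}} = Om ` {1..k} \<and>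
     (\<forall>i\<in>{1..k}. \<forall>j\<in>{1..k}. i \<noteq> j \<longrightarrow> Om i \<inter> Om j = {}) \<and>
     (\<forall>i\<in>{1..k}. card (Om i) = p \<and> cyclic_perm_group_of_order (constituent H (Om i)) p)"

definition perm_iso_witness ::
  "(nat \<Rightarrow> nat) \<Rightarrow> nat set \<Rightarrow> nat set \<Rightarrow> (nat \<Rightarrow> nat) set \<Rightarrow> (nat \<Rightarrow> nat) set \<Rightarrow> bool" where
  "perm_iso_witness phi A B GA GB \<longleftrightarrow> bij_betw phi A B \<and>
     (\<exists>psi. bij_betw psi GA GB \<and> (\<forall>x\<in>GA. \<forall>y\<in>GA. psi (x \<circ> y) = psi x \<circ> psi y) \<and>
        (\<forall>x\<in>GA. \<forall>d\<in>A. phi (x d) = psi x (phi d)))"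

definition swap_inv :: "(nat \<Rightarrow> nat) \<Rightarrow> nat set \<Rightarrow> nat set \<Rightarrow> nat \<Rightarrow> nat" where
  "swap_inv phi A B = (\<lambda>x. if x \<in> A then phi x else if x \<in> B then inv_into A phi x else x)"

definition gen_i :: "(nat \<Rightarrow> nat set) \<Rightarrow> (nat \<Rightarrow> nat \<Rightarrow> nat) \<Rightarrow> (nat \<Rightarrow> nat) \<Rightarrow> nat \<Rightarrow> nat \<Rightarrow> nat" where
  "gen_i Om phi g1 i = (if i = 1 then g1 else
      swap_inv (phi i) (Om 1) (Om i) \<circ> g1 \<circ> swap_inv (phi i) (Om 1) (Om i))"

text \<open>gamma(g_1^r_1 ... g_k^r_k) = (r_1,...,r_k); for an element h of H (viewed in
  G = G_1 x ... x G_k) the i-th coordinate is r mod p where h agrees with g_i^r on Om i.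
  Vectors of F_p^k are functions nat \<Rightarrow> 'p mod_ring supported on {1..k}.\<close>
definition gamma :: "nat \<Rightarrow> (nat \<Rightarrow> nat set) \<Rightarrow> (nat \<Rightarrow> nat \<Rightarrow> nat) \<Rightarrow> (nat \<Rightarrow> nat)
     \<Rightarrow> (nat \<Rightarrow> nat) \<Rightarrow> nat \<Rightarrow> 'p::prime_card mod_ring" where
  "gamma k Om phi g1 h = (\<lambda>i. if i \<in> {1..k} then
      of_nat (SOME r. \<forall>x\<in>Om i. h x = (gen_i Om phi g1 i ^^ r) x) else 0)"

text \<open>Rows of a d x k matrix M (rows 0..<d, columns 1..k), as vectors.\<close>
definition mrow :: "nat \<Rightarrow> (nat \<Rightarrow> nat \<Rightarrow> 'f::field) \<Rightarrow> nat \<Rightarrow> nat \<Rightarrow> 'f" where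
  "mrow k M l = (\<lambda>i. if i \<in> {1..k} then M l i else 0)"

definition lin_comb :: "nat \<Rightarrow> nat \<Rightarrow> (nat \<Rightarrow> nat \<Rightarrow> 'f::field) \<Rightarrow> (nat \<Rightarrow> 'f) \<Rightarrow> nat \<Rightarrow> 'f" where
  "lin_comb k d M c = (\<lambda>i. \<Sum>l<d. c l * mrow k M l i)"

definition generator_matrix :: "nat \<Rightarrow> (nat \<Rightarrow> 'f::field) set \<Rightarrow> nat \<Rightarrow> (nat \<Rightarrow> nat \<Rightarrow> 'f) \<Rightarrow> bool" where
  "generator_matrix k V d M \<longleftrightarrow>
     (\<forall>l<d. mrow k M l \<in> V) \<and>
     (\<forall>c. lin_comb k d M c = (\<lambda>_. 0) \<longrightarrow> (\<forall>l<d. c l = 0)) \<and>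
     V = {lin_comb k d M c | c. True}"

definition first_nonzero :: "nat \<Rightarrow> (nat \<Rightarrow> nat \<Rightarrow> 'f::field) \<Rightarrow> nat \<Rightarrow> 'f" where
  "first_nonzero d M i = M (LEAST l. l < d \<and> M l i \<noteq> 0) i"

definition perm_equiv :: "(nat \<Rightarrow> nat) set \<Rightarrow> nat set \<Rightarrow> nat set \<Rightarrow> bool" where
  "perm_equiv H A B \<longleftrightarrow> (\<exists>psi. bij_betw psi A B \<and> (\<forall>h\<in>H. \<forall>d\<in>A. psi (h d) = h (psi d)))"

end

theory Submission
  imports Defs
begin


lemma of_nat_modring_eq:
  "((of_nat r :: 'p::prime_card mod_ring) = of_nat s) \<longleftrightarrow> r mod CARD('p) = s mod CARD('p)"
  by (simp add: of_nat_eq_iff_cong_CHAR cong_def)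

lemma funpow_cancel:
  fixes f :: "'a \<Rightarrow> 'a"
  assumes inj: "inj f" and ab: "a < b" "f ^^ a = f ^^ b"
  shows "f ^^ (b - a) = id"
proof
  fix x
  obtain c where c: "b = a + c" using ab(1) less_imp_add_positive by blast
  have "(f ^^ a) ((f ^^ (b - a)) x) = (f ^^ b) x"
    using c by (simp add: funpow_add)
  also have "\<dots> = (f ^^ a) x" using ab(2) by simp
  finally show "(f ^^ (b - a)) x = id x"
    using inj_fn[OF inj, of a] by (simp add: inj_eq)
qed

lemma funpow_order:
  fixes f :: "'a \<Rightarrow> 'a"
  assumes inj: "inj f" and cardS: "card (range (\<lambda>r. f ^^ r)) = m0" and m0: "m0 > 0"
  shows "f ^^ r = f ^^ s \<longleftrightarrow> r mod m0 = s mod m0"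
proof -
  let ?S = "range (\<lambda>r. f ^^ r)"
  have fin: "finite ?S"
  proof (rule ccontr)
    assume "infinite ?S"
    then have "card ?S = 0" by simp
    with cardS m0 show False by simp
  qed
  have "\<not> inj_on (\<lambda>r. f ^^ r) {..card ?S}"
  proof
    assume "inj_on (\<lambda>r. f ^^ r) {..card ?S}"
    then have "card {..card ?S} \<le> card ?S"
      using card_inj_on_le[of "\<lambda>r. f ^^ r" "{..card ?S}" ?S] fin by auto
    then show False by simp
  qed
  then obtain a b where ab0: "a \<noteq> b" "f ^^ a = f ^^ b"
    unfolding inj_on_def by blast
  have "\<exists>a b. a < b \<and> f ^^ a = f ^^ b"
  proof (cases "a < b")
    case True then show ?thesis using ab0 by blast
  next
    case False then have "b < a" using ab0 by simp
    then show ?thesis using ab0(2) by (intro exI[of _ b] exI[of _ a]) simp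
  qed
  then obtain a b where ab: "a < b" "f ^^ a = f ^^ b" by blast
  have ex: "\<exists>m. 0 < m \<and> f ^^ m = id"
    using funpow_cancel[OF inj ab] ab(1) by (intro exI[of _ "b - a"]) simp
  define m where "m = (LEAST m. 0 < m \<and> f ^^ m = id)"
  have m: "0 < m" "f ^^ m = id" using LeastI_ex[OF ex] unfolding m_def by auto
  have red: "f ^^ r = f ^^ (r mod m)" for r
  proof -
    have "f ^^ r = f ^^ (r mod m + m * (r div m))" by simp
    also have "\<dots> = f ^^ (r mod m) \<circ> (f ^^ m) ^^ (r div m)"
      by (simp only: funpow_add funpow_mult)
    finally show ?thesis using m by simp
  qed
  have dist: "f ^^ a \<noteq> f ^^ b" if "a < b" "b < m" for a b
  proof
    assume eq: "f ^^ a = f ^^ b"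
    have "f ^^ (b - a) = id" using funpow_cancel[OF inj that(1) eq] .
    moreover have "b - a < m" "0 < b - a" using that by auto
    ultimately show False
      using not_less_Least[of "b - a" "\<lambda>m. 0 < m \<and> f ^^ m = id"] unfolding m_def by simp
  qed
  have dist2: "a = b" if "a < m" "b < m" "f ^^ a = f ^^ b" for a b
  proof (rule ccontr)
    assume "a \<noteq> b"
    then have "a < b \<or> b < a" by linarith
    then show False using dist[of a b] dist[of b a] that by auto
  qed
  have injm: "inj_on (\<lambda>r. f ^^ r) {..<m}"
    by (intro inj_onI) (use dist2 in auto)
  have "?S = (\<lambda>r. f ^^ r) ` {..<m}"
  proof
    show "?S \<subseteq> (\<lambda>r. f ^^ r) ` {..<m}"
    proof
      fix g assume "g \<in> ?S"
      then obtain r where "g = f ^^ r" by blast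
      then have "g = f ^^ (r mod m)" using red[of r] by simp
      moreover have "r mod m \<in> {..<m}" using m(1) by simp
      ultimately show "g \<in> (\<lambda>r. f ^^ r) ` {..<m}" by blast
    qed
  qed blast
  then have "card ?S = m" using injm card_image by fastforce
  then have mm: "m = m0" using cardS by simp
  have "f ^^ r = f ^^ s \<longleftrightarrow> f ^^ (r mod m) = f ^^ (s mod m)" using red[of r] red[of s] by simp
  also have "\<dots> \<longleftrightarrow> r mod m = s mod m"
    using dist2 m(1) by auto
  finally show ?thesis using mm by simp
qed




locale orb0 =
  fixes n :: nat and H :: "(nat \<Rightarrow> nat) set" and Om :: "nat set" and x0 :: nat
  assumes grp: "is_perm_group n H"
    and orb: "Om = orbit_of H x0"
begin

lemma idH: "id \<in> H" using grp unfolding is_perm_group_def by blast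

lemma compH: "g \<in> H \<Longrightarrow> h \<in> H \<Longrightarrow> g \<circ> h \<in> H"
  using grp unfolding is_perm_group_def by blast

lemma injH: "h \<in> H \<Longrightarrow> inj h"
  using grp permutes_inj unfolding is_perm_group_def by blast

lemma x0_in: "x0 \<in> Om"
  using idH unfolding orb orbit_of_def by (auto intro!: exI[of _ id])

lemma pres: "h \<in> H \<Longrightarrow> x \<in> Om \<Longrightarrow> h x \<in> Om"
proof -
  assume h: "h \<in> H" and x: "x \<in> Om"
  then obtain h' where h': "h' \<in> H" "x = h' x0" unfolding orb orbit_of_def by blast
  have "h x = (h \<circ> h') x0" using h' by simp
  moreover have "h \<circ> h' \<in> H" using compH h h' by blast
  ultimately show "h x \<in> Om" unfolding orb orbit_of_def by blast
qed

lemma restr_inj: "h \<in> H \<Longrightarrow> inj (restr Om h)"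
proof (rule injI)
  fix x y assume h: "h \<in> H" and eq: "restr Om h x = restr Om h y"
  show "x = y"
  proof (cases "x \<in> Om"; cases "y \<in> Om")
    assume "x \<in> Om" "y \<in> Om"
    then show ?thesis using eq injH[OF h] unfolding restr_def by (auto dest: injD)
  next
    assume "x \<in> Om" "y \<notin> Om"
    then show ?thesis using eq pres[OF h] unfolding restr_def by auto
  next
    assume "x \<notin> Om" "y \<in> Om"
    then show ?thesis using eq pres[OF h] unfolding restr_def by auto
  next
    assume "x \<notin> Om" "y \<notin> Om"
    then show ?thesis using eq unfolding restr_def by auto
  qed
qed

lemma constituent_inj: "g \<in> constituent H Om \<Longrightarrow> inj g"
  using restr_inj unfolding constituent_def by blast

lemma constituent_in: "g \<in> constituent H Om \<Longrightarrow> x \<in> Om \<Longrightarrow> g x \<in> Om"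
  using pres unfolding constituent_def restr_def by auto

end

locale orb = orb0 +
  fixes m0 :: nat and b :: "nat \<Rightarrow> nat" and a :: "nat \<Rightarrow> nat"
  assumes cardG: "card (constituent H Om) = m0" and m0: "m0 > 1"
    and bG: "b \<in> constituent H Om" and Gb: "constituent H Om = range (\<lambda>r. b ^^ r)"
    and ab: "\<forall>x\<in>Om. a x = b x"
begin

lemma hb: "\<exists>hb\<in>H. b = restr Om hb"
  using bG unfolding constituent_def by blast

lemma b_in: "x \<in> Om \<Longrightarrow> b x \<in> Om"
  using hb pres unfolding restr_def by auto

lemma b_out: "x \<notin> Om \<Longrightarrow> b x = x"
  using hb unfolding restr_def by auto

lemma b_inj: "inj b" using constituent_inj bG by blast

lemma bpow_in: "x \<in> Om \<Longrightarrow> (b ^^ r) x \<in> Om"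
  by (induction r) (auto simp: b_in)

lemma bpow_out: "x \<notin> Om \<Longrightarrow> (b ^^ r) x = x"
  by (induction r) (auto simp: b_out)

lemma apow: "x \<in> Om \<Longrightarrow> (a ^^ r) x = (b ^^ r) x"
  by (induction r) (auto simp: ab bpow_in)

lemma b_order: "b ^^ r = b ^^ s \<longleftrightarrow> r mod m0 = s mod m0"
  using funpow_order[OF b_inj, of m0] cardG Gb m0 by simp

lemma ord: "(\<forall>x\<in>Om. (a ^^ r) x = (a ^^ s) x) \<longleftrightarrow> r mod m0 = s mod m0"
proof
  assume A: "\<forall>x\<in>Om. (a ^^ r) x = (a ^^ s) x"
  have "b ^^ r = b ^^ s"
  proof
    fix x show "(b ^^ r) x = (b ^^ s) x"
      using A apow bpow_out by (cases "x \<in> Om") auto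
  qed
  then show "r mod m0 = s mod m0" using b_order by simp
next
  assume "r mod m0 = s mod m0"
  then have "b ^^ r = b ^^ s" using b_order by simp
  then show "\<forall>x\<in>Om. (a ^^ r) x = (a ^^ s) x" using apow by simp
qed

lemma ex: "h \<in> H \<Longrightarrow> \<exists>r. \<forall>x\<in>Om. h x = (a ^^ r) x"
proof -
  assume h: "h \<in> H"
  then have "restr Om h \<in> constituent H Om" unfolding constituent_def by blast
  then obtain r where r: "restr Om h = b ^^ r" using Gb by blast
  have "\<forall>x\<in>Om. h x = (a ^^ r) x"
  proof
    fix x assume x: "x \<in> Om"
    have "h x = restr Om h x" using x unfolding restr_def by simp
    also have "\<dots> = (a ^^ r) x" using r apow[OF x] by simp
    finally show "h x = (a ^^ r) x" .
  qed
  then show ?thesis by blast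
qed

lemma gen: "\<exists>h0\<in>H. \<forall>x\<in>Om. h0 x = a x"
proof -
  obtain hb where hb: "hb \<in> H" "b = restr Om hb" using hb by blast
  have "\<forall>x\<in>Om. hb x = a x" using hb ab unfolding restr_def by simp
  then show ?thesis using hb by blast
qed

lemma a_in: "x \<in> Om \<Longrightarrow> a x \<in> Om"
  using ab b_in by simp

lemma apow_in: "x \<in> Om \<Longrightarrow> (a ^^ r) x \<in> Om"
  using apow bpow_in by simp

lemma trans: "x \<in> Om \<Longrightarrow> \<exists>m. x = (a ^^ m) x0"
proof -
  assume x: "x \<in> Om"
  then obtain h where h: "h \<in> H" "x = h x0" unfolding orb orbit_of_def by blast
  obtain r where "\<forall>x\<in>Om. h x = (a ^^ r) x" using ex[OF h(1)] by blast
  then show ?thesis using h x0_in by blast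
qed

lemma regular: "(a ^^ r) x0 = (a ^^ s) x0 \<Longrightarrow> r mod m0 = s mod m0"
proof -
  assume eq: "(a ^^ r) x0 = (a ^^ s) x0"
  have "\<forall>x\<in>Om. (a ^^ r) x = (a ^^ s) x"
  proof
    fix x assume "x \<in> Om"
    then obtain m where m: "x = (a ^^ m) x0" using trans by blast
    have "(a ^^ r) x = (a ^^ (r + m)) x0" using m by (simp add: funpow_add)
    also have "\<dots> = (a ^^ m) ((a ^^ r) x0)" by (simp add: funpow_add add.commute)
    also have "\<dots> = (a ^^ m) ((a ^^ s) x0)" using eq by simp
    also have "\<dots> = (a ^^ (s + m)) x0" by (simp add: funpow_add add.commute)
    also have "\<dots> = (a ^^ s) x" using m by (simp add: funpow_add)
    finally show "(a ^^ r) x = (a ^^ s) x" .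
  qed
  then show ?thesis using ord by simp
qed

end




lemma InP_orbit:
  assumes InP: "InP_Cp p n k H Om" and i: "i \<in> {1..k}"
  shows "\<exists>x0. orb0 n H (Om i) x0"
proof -
  have "Om i \<in> Om ` {1..k}" using i by blast
  moreover have "{orbit_of H x | x. x \<in> {1..n}} = Om ` {1..k}" using InP unfolding InP_Cp_def by blast
  ultimately have "Om i \<in> {orbit_of H x | x. x \<in> {1..n}}" by simp
  then obtain x0 where "Om i = orbit_of H x0" by blast
  moreover have "is_perm_group n H" using InP unfolding InP_Cp_def by blast
  ultimately show ?thesis unfolding orb0_def by blast
qed

lemma orb_i:
  fixes n k :: nat and H :: "(nat \<Rightarrow> nat) set" and Om :: "nat \<Rightarrow> nat set"
    and g1 :: "nat \<Rightarrow> nat" and phi :: "nat \<Rightarrow> nat \<Rightarrow> nat"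
  assumes InP: "InP_Cp CARD('p::prime_card) n k H Om"
    and g1_gen: "g1 \<in> constituent H (Om 1)"
                "constituent H (Om 1) = range (\<lambda>r. g1 ^^ r)"
    and phi: "\<forall>i\<in>{1..k}. perm_iso_witness (phi i) (Om 1) (Om i)
                 (constituent H (Om 1)) (constituent H (Om i))"
    and i: "i \<in> {1..k}"
  shows "\<exists>x0 b. orb n H (Om i) x0 CARD('p) b (gen_i Om phi g1 i)"
proof -
  have one: "1 \<in> {1..k}" using i by simp
  have p1: "CARD('p) > 1" using prime_card prime_gt_1_nat by blast
  have cardG: "card (constituent H (Om j)) = CARD('p)" if "j \<in> {1..k}" for j
    using InP that unfolding InP_Cp_def cyclic_perm_group_of_order_def by blast
  obtain x1 where o1: "orb0 n H (Om 1) x1" using InP_orbit[OF InP one] by blast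
  obtain xi where oi: "orb0 n H (Om i) xi" using InP_orbit[OF InP i] by blast
  show ?thesis
  proof (cases "i = 1")
    case True
    have "orb n H (Om i) xi CARD('p) g1 (gen_i Om phi g1 i)"
      using oi cardG[OF i] p1 g1_gen True unfolding orb_def orb_axioms_def gen_i_def by simp
    then show ?thesis by blast
  next
    case False
    let ?G1 = "constituent H (Om 1)" and ?Gi = "constituent H (Om i)"
    obtain psi where bphi: "bij_betw (phi i) (Om 1) (Om i)"
      and bpsi: "bij_betw psi ?G1 ?Gi"
      and hom: "\<forall>x\<in>?G1. \<forall>y\<in>?G1. psi (x \<circ> y) = psi x \<circ> psi y"
      and comm: "\<forall>x\<in>?G1. \<forall>d\<in>Om 1. phi i (x d) = psi x (phi i d)"
      using phi i unfolding perm_iso_witness_def by blast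
    have "\<forall>i\<in>{1..k}. \<forall>j\<in>{1..k}. i \<noteq> j \<longrightarrow> Om i \<inter> Om j = {}"
      using InP unfolding InP_Cp_def by blast
    then have disj: "Om 1 \<inter> Om i = {}" using False i one by blast
    have g1pow: "g1 ^^ r \<in> ?G1" for r using g1_gen(2) by blast
    have psi_id: "psi id = id"
    proof -
      have idG: "id \<in> ?G1" using g1pow[of 0] by simp
      then have "psi id \<in> ?Gi" using bpsi bij_betwE by blast
      then have inj: "inj (psi id)" using orb0.constituent_inj[OF oi] by blast
      have "psi (id \<circ> id) = psi id \<circ> psi id" using hom idG by blast
      then have "psi id = psi id \<circ> psi id" by simp
      show ?thesis
      proof
        fix x
        have "psi id (psi id x) = psi id x" using \<open>psi id = psi id \<circ> psi id\<close>
          by (simp add: fun_eq_iff)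
        then show "psi id x = id x" using inj by (simp add: inj_eq)
      qed
    qed
    have psi_pow: "psi (g1 ^^ r) = psi g1 ^^ r" for r
    proof (induction r)
      case 0 then show ?case using psi_id by (simp add: id_def)
    next
      case (Suc r)
      have "psi (g1 ^^ Suc r) = psi (g1 \<circ> g1 ^^ r)" by simp
      also have "\<dots> = psi g1 \<circ> psi (g1 ^^ r)" using hom g1_gen(1) g1pow by blast
      finally show ?case using Suc by (simp only: funpow.simps)
    qed
    have Gb: "?Gi = range (\<lambda>r. psi g1 ^^ r)"
    proof -
      have "?Gi = psi ` ?G1" using bpsi unfolding bij_betw_def by simp
      also have "\<dots> = range (\<lambda>r. psi (g1 ^^ r))" using g1_gen(2) by (simp add: image_image)
      finally show ?thesis using psi_pow by simp
    qed
    have bG: "psi g1 \<in> ?Gi" using bpsi g1_gen(1) bij_betwE by blast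
    have ab: "\<forall>x\<in>Om i. gen_i Om phi g1 i x = psi g1 x"
    proof
      fix x assume x: "x \<in> Om i"
      have xn1: "x \<notin> Om 1" using x disj by blast
      define d where "d = inv_into (Om 1) (phi i) x"
      have d: "d \<in> Om 1" "phi i d = x" using bphi x unfolding d_def
        by (auto simp: bij_betw_def inv_into_into f_inv_into_f)
      have g1d: "g1 d \<in> Om 1" using orb0.constituent_in[OF o1 g1_gen(1) d(1)] .
      have "gen_i Om phi g1 i x = swap_inv (phi i) (Om 1) (Om i) (g1 d)"
        using False x xn1 unfolding gen_i_def swap_inv_def d_def by simp
      also have "\<dots> = phi i (g1 d)" using g1d unfolding swap_inv_def by simp
      also have "\<dots> = psi g1 (phi i d)" using comm g1_gen(1) d(1) by blast
      also have "\<dots> = psi g1 x" using d(2) by simp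
      finally show "gen_i Om phi g1 i x = psi g1 x" .
    qed
    have "orb n H (Om i) xi CARD('p) (psi g1) (gen_i Om phi g1 i)"
      using oi cardG[OF i] p1 bG Gb ab unfolding orb_def orb_axioms_def by simp
    then show ?thesis by blast
  qed
qed




lemma equiv_iff:
  fixes Gi Gj :: "(nat \<Rightarrow> nat) \<Rightarrow> 'p::prime_card mod_ring"
  assumes oi: "orb n H Oi xi CARD('p) bi ai" and oj: "orb n H Oj xj CARD('p) bj aj"
    and gi: "\<And>h r. h \<in> H \<Longrightarrow> (\<forall>x\<in>Oi. h x = (ai ^^ r) x) \<Longrightarrow> Gi h = of_nat r"
    and gj: "\<And>h r. h \<in> H \<Longrightarrow> (\<forall>x\<in>Oj. h x = (aj ^^ r) x) \<Longrightarrow> Gj h = of_nat r"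
    and ci: "card Oi = CARD('p)" and cj: "card Oj = CARD('p)"
  shows "perm_equiv H Oi Oj \<longleftrightarrow> (\<exists>c. c \<noteq> 0 \<and> (\<forall>h\<in>H. Gj h = c * Gi h))"
proof -
  interpret I: orb n H Oi xi "CARD('p)" bi ai by (rule oi)
  interpret J: orb n H Oj xj "CARD('p)" bj aj by (rule oj)
  have p1: "CARD('p) > 1" using prime_card prime_gt_1_nat by blast
  show ?thesis
  proof
    assume "perm_equiv H Oi Oj"
    then obtain psi where bpsi: "bij_betw psi Oi Oj"
      and comm: "\<forall>h\<in>H. \<forall>d\<in>Oi. psi (h d) = h (psi d)"
      unfolding perm_equiv_def by blast
    obtain h0 where h0: "h0 \<in> H" "\<forall>x\<in>Oi. h0 x = ai x" using I.gen by blast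
    obtain s where s: "\<forall>y\<in>Oj. h0 y = (aj ^^ s) y" using J.ex[OF h0(1)] by blast
    have L1: "(h0 ^^ r) x = (ai ^^ r) x" if "x \<in> Oi" for r x
      using that by (induction r) (auto simp: h0(2) I.apow_in)
    have L1': "(h0 ^^ r) x \<in> Oi" if "x \<in> Oi" for r x
      using L1 I.apow_in that by simp
    have L2: "psi ((h0 ^^ r) x) = (h0 ^^ r) (psi x)" if "x \<in> Oi" for r x
      using that
    proof (induction r)
      case 0 then show ?case by simp
    next
      case (Suc r)
      have "psi ((h0 ^^ Suc r) x) = psi (h0 ((h0 ^^ r) x))" by simp
      also have "\<dots> = h0 (psi ((h0 ^^ r) x))" using comm h0(1) L1'[OF Suc.prems] by blast
      also have "\<dots> = (h0 ^^ Suc r) (psi x)" using Suc by simp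
      finally show ?case .
    qed
    have L3: "(h0 ^^ r) y = (aj ^^ (s * r)) y" if "y \<in> Oj" for r y
      using that
    proof (induction r)
      case 0 then show ?case by simp
    next
      case (Suc r)
      have "(h0 ^^ Suc r) y = h0 ((aj ^^ (s * r)) y)" using Suc by simp
      also have "\<dots> = (aj ^^ s) ((aj ^^ (s * r)) y)" using s J.apow_in[OF Suc.prems] by blast
      also have "\<dots> = (aj ^^ (s * Suc r)) y" by (simp add: funpow_add)
      finally show ?case .
    qed
    have psi_in: "psi x \<in> Oj" if "x \<in> Oi" for x using bpsi that bij_betwE by blast
    have psi_surj: "\<exists>x\<in>Oi. y = psi x" if "y \<in> Oj" for y
      using bpsi that unfolding bij_betw_def by blast
    have main: "Gj h = of_nat s * Gi h" if h: "h \<in> H" for h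
    proof -
      obtain r where r: "\<forall>x\<in>Oi. h x = (ai ^^ r) x" using I.ex[OF h] by blast
      have "\<forall>y\<in>Oj. h y = (aj ^^ (s * r)) y"
      proof
        fix y assume y: "y \<in> Oj"
        then obtain x where x: "x \<in> Oi" "y = psi x" using psi_surj by blast
        have "h y = psi (h x)" using comm h x by simp
        also have "\<dots> = psi ((h0 ^^ r) x)" using r x L1 by simp
        also have "\<dots> = (h0 ^^ r) y" using L2 x by simp
        also have "\<dots> = (aj ^^ (s * r)) y" using L3 y by simp
        finally show "h y = (aj ^^ (s * r)) y" .
      qed
      then have "Gj h = of_nat (s * r)" using gj h by blast
      moreover have "Gi h = of_nat r" using gi h r by blast
      ultimately show ?thesis by simp
    qed
    have cnz: "(of_nat s :: 'p mod_ring) \<noteq> 0"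
    proof
      assume "(of_nat s :: 'p mod_ring) = 0"
      then have "(of_nat s :: 'p mod_ring) = of_nat 0" by simp
      then have "s mod CARD('p) = 0 mod CARD('p)" using of_nat_modring_eq by blast
      then have "\<forall>y\<in>Oj. (aj ^^ s) y = (aj ^^ 0) y" using J.ord by blast
      then have fixj: "\<forall>y\<in>Oj. h0 y = y" using s by simp
      have "\<forall>x\<in>Oi. (ai ^^ 1) x = (ai ^^ 0) x"
      proof
        fix x assume x: "x \<in> Oi"
        have "psi (h0 x) = psi x" using comm h0(1) x fixj psi_in by simp
        moreover have "h0 x \<in> Oi" using I.pres h0(1) x by blast
        ultimately have "h0 x = x" using bpsi x unfolding bij_betw_def by (auto dest: inj_onD)
        then show "(ai ^^ 1) x = (ai ^^ 0) x" using h0(2) x by simp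
      qed
      then have "1 mod CARD('p) = 0 mod CARD('p)" using I.ord by blast
      then show False using p1 by simp
    qed
    show "\<exists>c. c \<noteq> 0 \<and> (\<forall>h\<in>H. Gj h = c * Gi h)" using main cnz by blast
  next
    assume "\<exists>c. c \<noteq> 0 \<and> (\<forall>h\<in>H. Gj h = c * Gi h)"
    then obtain c where c: "c \<noteq> 0" "\<forall>h\<in>H. Gj h = c * Gi h" by blast
    obtain s where s: "c = of_nat s" using surj_of_nat_mod_ring by blast
    define m where "m x = (SOME m. x = (ai ^^ m) xi)" for x
    have mx: "x = (ai ^^ m x) xi" if "x \<in> Oi" for x
      using I.trans[OF that] unfolding m_def by (rule someI_ex)
    define psi where "psi x = (aj ^^ (s * m x)) xj" for x
    have psi_in: "psi x \<in> Oj" for x unfolding psi_def using J.apow_in J.x0_in by blast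
    have eqmod: "(of_nat a :: 'p mod_ring) = of_nat b \<Longrightarrow> (aj ^^ a) xj = (aj ^^ b) xj" for a b
      using J.ord J.x0_in of_nat_modring_eq by blast
    have comm: "\<forall>h\<in>H. \<forall>d\<in>Oi. psi (h d) = h (psi d)"
    proof (intro ballI)
      fix h d assume h: "h \<in> H" and d: "d \<in> Oi"
      obtain r where r: "\<forall>x\<in>Oi. h x = (ai ^^ r) x" using I.ex[OF h] by blast
      obtain r' where r': "\<forall>x\<in>Oj. h x = (aj ^^ r') x" using J.ex[OF h] by blast
      have "of_nat r' = c * of_nat r" using c(2) gi gj h r r' by metis
      then have rr: "(of_nat r' :: 'p mod_ring) = of_nat s * of_nat r" using s by simp
      have hd: "h d \<in> Oi" using I.pres h d by blast
      have "(ai ^^ m (h d)) xi = h d" using mx[OF hd] by simp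
      also have "\<dots> = (ai ^^ r) ((ai ^^ m d) xi)" using r d mx[OF d] by metis
      also have "\<dots> = (ai ^^ (r + m d)) xi" by (simp add: funpow_add)
      finally have "m (h d) mod CARD('p) = (r + m d) mod CARD('p)" using I.regular by blast
      then have "(of_nat (m (h d)) :: 'p mod_ring) = of_nat (r + m d)"
        using of_nat_modring_eq by blast
      then have mm: "(of_nat (m (h d)) :: 'p mod_ring) = of_nat r + of_nat (m d)" by simp
      have "h (psi d) = (aj ^^ r') ((aj ^^ (s * m d)) xj)" using r' psi_in unfolding psi_def by blast
      also have "\<dots> = (aj ^^ (r' + s * m d)) xj" by (simp add: funpow_add)
      also have "\<dots> = (aj ^^ (s * m (h d))) xj"
      proof (rule eqmod)
        show "(of_nat (r' + s * m d) :: 'p mod_ring) = of_nat (s * m (h d))"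
          using rr mm by (simp add: algebra_simps)
      qed
      finally show "psi (h d) = h (psi d)" unfolding psi_def by simp
    qed
    have inj: "inj_on psi Oi"
    proof (rule inj_onI)
      fix x x' assume x: "x \<in> Oi" and x': "x' \<in> Oi" and eq: "psi x = psi x'"
      then have "(s * m x) mod CARD('p) = (s * m x') mod CARD('p)"
        using J.regular unfolding psi_def by blast
      then have "(of_nat (s * m x) :: 'p mod_ring) = of_nat (s * m x')"
        using of_nat_modring_eq by blast
      then have "(of_nat s :: 'p mod_ring) * of_nat (m x) = of_nat s * of_nat (m x')" by simp
      then have "(of_nat (m x) :: 'p mod_ring) = of_nat (m x')" using c(1) s by simp
      then have "m x mod CARD('p) = m x' mod CARD('p)" using of_nat_modring_eq by blast
      then have "(ai ^^ m x) xi = (ai ^^ m x') xi" using I.ord I.x0_in by blast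
      then show "x = x'" using mx x x' by metis
    qed
    have fin: "finite Oj" using cj p1 card.infinite by fastforce
    have "psi ` Oi = Oj"
    proof (rule card_subset_eq[OF fin])
      show "psi ` Oi \<subseteq> Oj" using psi_in by blast
      show "card (psi ` Oi) = card Oj" using card_image[OF inj] ci cj by simp
    qed
    then have "bij_betw psi Oi Oj" using inj unfolding bij_betw_def by blast
    then show "perm_equiv H Oi Oj" using comm unfolding perm_equiv_def by blast
  qed
qed




lemma gamma_val:
  assumes o: "orb n H (Om l) x0 CARD('p::prime_card) b (gen_i Om phi g1 l)"
    and l: "l \<in> {1..k}" and h: "h \<in> H"
    and r: "\<forall>x\<in>Om l. h x = (gen_i Om phi g1 l ^^ r) x"
  shows "(gamma k Om phi g1 h l :: 'p mod_ring) = of_nat r"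
proof -
  interpret I: orb n H "Om l" x0 "CARD('p)" b "gen_i Om phi g1 l" by (rule o)
  let ?r = "SOME r. \<forall>x\<in>Om l. h x = (gen_i Om phi g1 l ^^ r) x"
  have A: "\<forall>x\<in>Om l. h x = (gen_i Om phi g1 l ^^ ?r) x" using r by (rule someI)
  have "\<forall>x\<in>Om l. (gen_i Om phi g1 l ^^ ?r) x = (gen_i Om phi g1 l ^^ r) x"
  proof
    fix x assume x: "x \<in> Om l"
    have e1: "h x = (gen_i Om phi g1 l ^^ ?r) x" using A x by blast
    have e2: "h x = (gen_i Om phi g1 l ^^ r) x" using r x by blast
    show "(gen_i Om phi g1 l ^^ ?r) x = (gen_i Om phi g1 l ^^ r) x" using e1 e2 by (rule subst)
  qed
  then have "?r mod CARD('p) = r mod CARD('p)" using I.ord by blast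
  then have "(of_nat ?r :: 'p mod_ring) = of_nat r" using of_nat_modring_eq by blast
  then show ?thesis using l unfolding gamma_def by simp
qed

lemma col_iff:
  fixes M :: "nat \<Rightarrow> nat \<Rightarrow> 'f::field" and G :: "(nat \<Rightarrow> nat) \<Rightarrow> nat \<Rightarrow> 'f"
  assumes M: "generator_matrix k (G ` H) d M" and ij: "i \<in> {1..k}" "j \<in> {1..k}"
  shows "(\<forall>h\<in>H. G h j = c * G h i) \<longleftrightarrow> (\<forall>l<d. M l j = c * M l i)"
proof
  assume A: "\<forall>h\<in>H. G h j = c * G h i"
  show "\<forall>l<d. M l j = c * M l i"
  proof (intro allI impI)
    fix l assume "l < d"
    then have "mrow k M l \<in> G ` H" using M unfolding generator_matrix_def by blast
    then obtain h where "h \<in> H" "mrow k M l = G h" by blast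
    then have "mrow k M l j = c * mrow k M l i" using A by simp
    then show "M l j = c * M l i" using ij unfolding mrow_def by simp
  qed
next
  assume A: "\<forall>l<d. M l j = c * M l i"
  show "\<forall>h\<in>H. G h j = c * G h i"
  proof
    fix h assume "h \<in> H"
    then have "G h \<in> {lin_comb k d M cc | cc. True}" using M unfolding generator_matrix_def by blast
    then obtain cc where cc: "G h = lin_comb k d M cc" by blast
    have "G h j = (\<Sum>l<d. cc l * M l j)" using cc ij unfolding lin_comb_def mrow_def by simp
    also have "\<dots> = (\<Sum>l<d. c * (cc l * M l i))" using A by (intro sum.cong) (auto simp: algebra_simps)
    also have "\<dots> = c * (\<Sum>l<d. cc l * M l i)" by (simp add: sum_distrib_left)
    also have "\<dots> = c * G h i" using cc ij unfolding lin_comb_def mrow_def by simp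
    finally show "G h j = c * G h i" .
  qed
qed

lemma col_nz:
  fixes M :: "nat \<Rightarrow> nat \<Rightarrow> 'f::field" and G :: "(nat \<Rightarrow> nat) \<Rightarrow> nat \<Rightarrow> 'f"
  assumes M: "generator_matrix k (G ` H) d M" and i: "i \<in> {1..k}"
    and h: "h \<in> H" "G h i \<noteq> 0"
  shows "\<exists>l<d. M l i \<noteq> 0"
proof (rule ccontr)
  assume "\<not> (\<exists>l<d. M l i \<noteq> 0)"
  then have z: "\<forall>l<d. M l i = 0" by simp
  have "G h \<in> {lin_comb k d M cc | cc. True}" using M h unfolding generator_matrix_def by blast
  then obtain cc where cc: "G h = lin_comb k d M cc" by blast
  have "G h i = (\<Sum>l<d. cc l * M l i)" using cc i unfolding lin_comb_def mrow_def by simp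
  also have "\<dots> = 0" using z by simp
  finally show False using h by simp
qed

lemma first_nz:
  fixes M :: "nat \<Rightarrow> nat \<Rightarrow> 'f::field"
  assumes "\<exists>l<d. M l i \<noteq> 0"
  shows "first_nonzero d M i \<noteq> 0"
  using LeastI_ex[of "\<lambda>l. l < d \<and> M l i \<noteq> 0"] assms unfolding first_nonzero_def by blast

lemma norm_iff:
  fixes M :: "nat \<Rightarrow> nat \<Rightarrow> 'f::field"
  assumes ni: "\<exists>l<d. M l i \<noteq> 0" and nj: "\<exists>l<d. M l j \<noteq> 0"
  shows "(\<exists>c. c \<noteq> 0 \<and> (\<forall>l<d. M l j = c * M l i)) \<longleftrightarrow>
    (\<forall>l<d. inverse (first_nonzero d M i) * M l i = inverse (first_nonzero d M j) * M l j)"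
proof
  assume "\<exists>c. c \<noteq> 0 \<and> (\<forall>l<d. M l j = c * M l i)"
  then obtain c where c: "c \<noteq> 0" "\<forall>l<d. M l j = c * M l i" by blast
  have P: "(\<lambda>l. l < d \<and> M l j \<noteq> 0) = (\<lambda>l. l < d \<and> M l i \<noteq> 0)"
    using c by (auto simp: fun_eq_iff)
  define li where "li = (LEAST l. l < d \<and> M l i \<noteq> 0)"
  have li: "li < d" using LeastI_ex[of "\<lambda>l. l < d \<and> M l i \<noteq> 0"] ni unfolding li_def by blast
  have fj: "first_nonzero d M j = c * first_nonzero d M i"
    unfolding first_nonzero_def P using c li li_def by simp
  have fi: "first_nonzero d M i \<noteq> 0" using first_nz ni by blast
  show "\<forall>l<d. inverse (first_nonzero d M i) * M l i = inverse (first_nonzero d M j) * M l j"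
    using c fj fi by (simp add: field_simps)
next
  assume A: "\<forall>l<d. inverse (first_nonzero d M i) * M l i = inverse (first_nonzero d M j) * M l j"
  have fi: "first_nonzero d M i \<noteq> 0" using first_nz ni by blast
  have fj: "first_nonzero d M j \<noteq> 0" using first_nz nj by blast
  have "\<forall>l<d. M l j = (first_nonzero d M j * inverse (first_nonzero d M i)) * M l i"
  proof (intro allI impI)
    fix l assume "l < d"
    then have "inverse (first_nonzero d M i) * M l i = inverse (first_nonzero d M j) * M l j" using A by blast
    then show "M l j = (first_nonzero d M j * inverse (first_nonzero d M i)) * M l i"
      using fi fj by (simp add: field_simps)
  qed
  moreover have "first_nonzero d M j * inverse (first_nonzero d M i) \<noteq> 0" using fi fj by simp
  ultimately show "\<exists>c. c \<noteq> 0 \<and> (\<forall>l<d. M l j = c * M l i)" by blast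
qed

theorem lemma5p2:
  fixes n k :: nat and H :: "(nat \<Rightarrow> nat) set" and Om :: "nat \<Rightarrow> nat set"
    and g1 :: "nat \<Rightarrow> nat" and phi :: "nat \<Rightarrow> nat \<Rightarrow> nat"
    and d :: nat and M :: "nat \<Rightarrow> nat \<Rightarrow> 'p::prime_card mod_ring"
    and i j :: nat
  assumes InP: "InP_Cp CARD('p) n k H Om"
    and g1_gen: "g1 \<in> constituent H (Om 1)"
                "constituent H (Om 1) = range (\<lambda>r. g1 ^^ r)"
    and phi: "\<forall>i\<in>{1..k}. perm_iso_witness (phi i) (Om 1) (Om i)
                 (constituent H (Om 1)) (constituent H (Om i))"
    and M: "generator_matrix k ((gamma k Om phi g1 :: (nat \<Rightarrow> nat) \<Rightarrow> nat \<Rightarrow> 'p mod_ring) ` H) d M"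
    and ij: "i \<in> {1..k}" "j \<in> {1..k}"
  shows "perm_equiv H (Om i) (Om j) \<longleftrightarrow>
    (\<forall>l<d. inverse (first_nonzero d M i) * M l i = inverse (first_nonzero d M j) * M l j)"
proof -
  let ?G = "gamma k Om phi g1 :: (nat \<Rightarrow> nat) \<Rightarrow> nat \<Rightarrow> 'p mod_ring"
  obtain xi bi where oi: "orb n H (Om i) xi CARD('p) bi (gen_i Om phi g1 i)"
    using orb_i[OF InP g1_gen phi ij(1)] by blast
  obtain xj bj where oj: "orb n H (Om j) xj CARD('p) bj (gen_i Om phi g1 j)"
    using orb_i[OF InP g1_gen phi ij(2)] by blast
  have cards: "card (Om l) = CARD('p)" if "l \<in> {1..k}" for l
    using InP that unfolding InP_Cp_def by blast
  have nz: "\<exists>l<d. M l q \<noteq> 0"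
    if o: "orb n H (Om q) xq CARD('p) bq (gen_i Om phi g1 q)" and q: "q \<in> {1..k}" for q xq bq
  proof -
    interpret Q: orb n H "Om q" xq "CARD('p)" bq "gen_i Om phi g1 q" by (rule o)
    obtain h0 where h0: "h0 \<in> H" "\<forall>x\<in>Om q. h0 x = gen_i Om phi g1 q x" using Q.gen by blast
    have "\<forall>x\<in>Om q. h0 x = (gen_i Om phi g1 q ^^ 1) x" using h0 by simp
    then have "?G h0 q = of_nat 1" using gamma_val[OF o q h0(1)] by blast
    then have "?G h0 q \<noteq> 0" by simp
    then show ?thesis using col_nz[OF M q h0(1)] by blast
  qed
  have "perm_equiv H (Om i) (Om j) \<longleftrightarrow> (\<exists>c. c \<noteq> 0 \<and> (\<forall>h\<in>H. ?G h j = c * ?G h i))"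
  proof (rule equiv_iff[OF oi oj])
    show "\<And>h r. h \<in> H \<Longrightarrow> (\<forall>x\<in>Om i. h x = (gen_i Om phi g1 i ^^ r) x) \<Longrightarrow> ?G h i = of_nat r"
      using gamma_val[OF oi ij(1)] by blast
    show "\<And>h r. h \<in> H \<Longrightarrow> (\<forall>x\<in>Om j. h x = (gen_i Om phi g1 j ^^ r) x) \<Longrightarrow> ?G h j = of_nat r"
      using gamma_val[OF oj ij(2)] by blast
    show "card (Om i) = CARD('p)" using cards ij by blast
    show "card (Om j) = CARD('p)" using cards ij by blast
  qed
  also have "\<dots> \<longleftrightarrow> (\<exists>c. c \<noteq> 0 \<and> (\<forall>l<d. M l j = c * M l i))"
    using col_iff[OF M ij] by blast
  also have "\<dots> \<longleftrightarrow> (\<forall>l<d. inverse (first_nonzero d M i) * M l i = inverse (first_nonzero d M j) * M l j)"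
    using norm_iff[OF nz[OF oi ij(1)] nz[OF oj ij(2)]] .
  finally show ?thesis .
qed


end
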